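(* Let $\alpha,\beta$ be sets, $z\in\beta$, $\mathit{seq}:\beta\times\alpha\to\beta$, $\mathit{comb}:\beta\times\beta\to\beta$. Calls $\mathrm{treeAggregate}(z,\mathit{seq},\mathit{comb},\mathit{rdd})$ have deterministic outcomes if and only if calls $\mathrm{aggregate}(z,\mathit{seq},\mathit{comb},\mathit{rdd})$ have deterministic outcomes.
   Context: Lists are finite; $\mathbin{+\!\!+}$ is concatenation. $\mathrm{foldl}(f,b,[\,])=b$, $\mathrm{foldl}(f,b,[x_1,\dots,x_n])=f(\cdots f(f(b,x_1),x_2)\cdots,x_n)$. An RDD is a list of lists. A partitioning is a function $P$ sending each list $L$ over $\alpha$ to a nonempty RDD obtained by splitting $L$ into consecutive (possibly empty) pieces $p_1,\dots,p_n$ ($n\ge1$) with $p_1\mathbin{+\!\!+}\cdots\mathbin{+\!\!+}p_n=L$ and then arbitrarily permuting $[p_1,\dots,p_n]$. $\mathrm{aggregate}_{\mathrm{det}}(z,\mathit{seq},\mathit{comb},[q_1,\dots,q_m])=\mathrm{foldl}(\mathit{comb},z,[\mathrm{foldl}(\mathit{seq},z,q_1),\dots,\mathrm{foldl}(\mathit{seq},z,q_m)])$; calls to $\mathrm{aggregate}$ have deterministic outcomes if $\mathrm{aggregate}_{\mathrm{det}}(z,\mathit{seq},\mathit{comb},P(L))=\mathrm{foldl}(\mathit{seq},z,L)$ for all $L$ and all partitionings $P$. An instantiation of $\mathrm{apply}$ is any deterministic procedure which, given $\mathit{comb}$ and a nonempty list $[r_1,\dots,r_m]$, returns the single value obtained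 by repeatedly choosing two adjacent elements $l',r'$ of the current list and replacing them by $\mathit{comb}(l',r')$ until one element remains (equivalently, evaluating $\mathit{comb}$ along some binary tree whose leaves are $r_1,\dots,r_m$ in order). $\mathrm{treeAggregate}_{\mathrm{bt}}(\mathrm{apply},z,\mathit{seq},\mathit{comb},[q_1,\dots,q_m])=\mathrm{apply}(\mathit{comb},[\mathrm{foldl}(\mathit{seq},z,q_1),\dots,\mathrm{foldl}(\mathit{seq},z,q_m)])$. Calls $\mathrm{treeAggregate}(z,\mathit{seq},\mathit{comb},\mathit{rdd})$ have deterministic outcomes if $\mathrm{treeAggregate}_{\mathrm{bt}}(\mathrm{apply},z,\mathit{seq},\mathit{comb},P(L))=\mathrm{foldl}(\mathit{seq},z,L)$ for all lists $L$, partitionings $P$, and instantiations $\mathrm{apply}$. *)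

theory Defs
  imports Main "HOL-Library.Multiset"
begin

type_synonym 'a rdd = "'a list list"

definition is_partition_of :: "'a list \<Rightarrow> 'a rdd \<Rightarrow> bool" where
  "is_partition_of L R \<longleftrightarrow>
     (\<exists>ps. ps \<noteq> [] \<and> concat ps = L \<and> mset R = mset ps)"

definition partitioning :: "('a list \<Rightarrow> 'a rdd) \<Rightarrow> bool" where
  "partitioning P \<longleftrightarrow> (\<forall>L. is_partition_of L (P L))"

definition aggregate_det ::
  "'b \<Rightarrow> ('b \<Rightarrow> 'a \<Rightarrow> 'b) \<Rightarrow> ('b \<Rightarrow> 'b \<Rightarrow> 'b) \<Rightarrow> 'a rdd \<Rightarrow> 'b" where
  "aggregate_det z seq comb qs = foldl comb z (map (foldl seq z) qs)"

inductive tree_eval :: "('b \<Rightarrow> 'b \<Rightarrow> 'b) \<Rightarrow> 'b list \<Rightarrow> 'b \<Rightarrow> bool"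
  for comb where
  leaf: "tree_eval comb [x] x"
| node: "tree_eval comb xs a \<Longrightarrow> tree_eval comb ys b \<Longrightarrow>
         tree_eval comb (xs @ ys) (comb a b)"

definition apply_inst :: "(('b \<Rightarrow> 'b \<Rightarrow> 'b) \<Rightarrow> 'b list \<Rightarrow> 'b) \<Rightarrow> bool" where
  "apply_inst ap \<longleftrightarrow> (\<forall>comb rs. rs \<noteq> [] \<longrightarrow> tree_eval comb rs (ap comb rs))"

definition treeAggregate_bt ::
  "(('b \<Rightarrow> 'b \<Rightarrow> 'b) \<Rightarrow> 'b list \<Rightarrow> 'b) \<Rightarrow> 'b \<Rightarrow> ('b \<Rightarrow> 'a \<Rightarrow> 'b) \<Rightarrow>
   ('b \<Rightarrow> 'b \<Rightarrow> 'b) \<Rightarrow> 'a rdd \<Rightarrow> 'b" where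
  "treeAggregate_bt ap z seq comb qs = ap comb (map (foldl seq z) qs)"

definition aggregate_deterministic ::
  "'b \<Rightarrow> ('b \<Rightarrow> 'a \<Rightarrow> 'b) \<Rightarrow> ('b \<Rightarrow> 'b \<Rightarrow> 'b) \<Rightarrow> bool" where
  "aggregate_deterministic z seq comb \<longleftrightarrow>
     (\<forall>(P :: 'a list \<Rightarrow> 'a rdd) L. partitioning P \<longrightarrow>
        aggregate_det z seq comb (P L) = foldl seq z L)"

definition treeAggregate_deterministic ::
  "'b \<Rightarrow> ('b \<Rightarrow> 'a \<Rightarrow> 'b) \<Rightarrow> ('b \<Rightarrow> 'b \<Rightarrow> 'b) \<Rightarrow> bool" where
  "treeAggregate_deterministic z seq comb \<longleftrightarrow>
     (\<forall>(P :: 'a list \<Rightarrow> 'a rdd) L ap. partitioning P \<longrightarrow> apply_inst ap \<longrightarrow>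
        treeAggregate_bt ap z seq comb (P L) = foldl seq z L)"

end

theory Submission
  imports Defs
begin

lemma treeA:
  assumes hom: "\<And>a b. comb (f a) (f b) = f (a @ b)"
  shows "tree_eval comb rs v \<Longrightarrow> rs = map f qs \<Longrightarrow> v = f (concat qs)"
proof (induction rs v arbitrary: qs rule: tree_eval.induct)
  case (leaf x)
  then show ?case by (cases qs) auto
next
  case (node xs a ys b)
  from node.prems obtain q1 q2 where "qs = q1 @ q2" "xs = map f q1" "ys = map f q2"
    using map_eq_append_conv[of f qs xs ys] by auto
  with node.IH show ?case by (simp add: hom)
qed

lemma foldB:
  assumes hom: "\<And>a b. comb (f a) (f b) = f (a @ b)" and fz: "f [] = z"
  shows "foldl comb z (map f qs) = f (concat qs)"
proof (induction qs rule: rev_induct)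
  case Nil then show ?case using fz by simp
next
  case (snoc q qs) then show ?case by (simp add: hom)
qed

definition ap0 :: "('b \<Rightarrow> 'b \<Rightarrow> 'b) \<Rightarrow> 'b list \<Rightarrow> 'b" where
  "ap0 comb rs = foldl comb (hd rs) (tl rs)"

lemma ap0_tree: "rs \<noteq> [] \<Longrightarrow> tree_eval comb rs (foldl comb (hd rs) (tl rs))"
proof (induction rs rule: rev_induct)
  case Nil then show ?case by simp
next
  case (snoc y xs)
  show ?case
  proof (cases "xs = []")
    case True then show ?thesis by (simp add: tree_eval.leaf)
  next
    case False
    have "tree_eval comb (xs @ [y]) (comb (foldl comb (hd xs) (tl xs)) y)"
      by (rule tree_eval.node[OF snoc.IH[OF False] tree_eval.leaf])
    then show ?thesis using False by (cases xs) auto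
  qed
qed

lemma ap0_inst: "apply_inst ap0"
  unfolding apply_inst_def ap0_def using ap0_tree by blast

lemma part_id: fixes L :: "'a list" shows "partitioning (\<lambda>L'. if L' = L then R else [L']) \<longleftrightarrow> is_partition_of L R"
  unfolding partitioning_def
proof
  assume "\<forall>La. is_partition_of La (if La = L then R else [La])"
  then have "is_partition_of L (if L = L then R else [L])" by (rule spec)
  then show "is_partition_of L R" by simp
next
  assume h: "is_partition_of L R"
  show "\<forall>La::'a list. is_partition_of La (if La = L then R else [La])"
  proof
    fix La :: "'a list"
    have "is_partition_of La [La]" unfolding is_partition_of_def
      by (rule exI[of _ "[La]"]) simp
    then show "is_partition_of La (if La = L then R else [La])" using h by auto
  qed
qed

lemma part_ne: "is_partition_of L R \<Longrightarrow> R \<noteq> []"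
  unfolding is_partition_of_def by auto

lemma part_two: "is_partition_of (a @ b) [a, b]"
  unfolding is_partition_of_def by (rule exI[of _ "[a,b]"]) simp

lemma part_one: "is_partition_of L [L]"
  unfolding is_partition_of_def by (rule exI[of _ "[L]"]) simp

theorem proposition1:
  fixes z :: 'b and seq :: "'b \<Rightarrow> 'a \<Rightarrow> 'b" and comb :: "'b \<Rightarrow> 'b \<Rightarrow> 'b"
  shows "treeAggregate_deterministic z seq comb \<longleftrightarrow> aggregate_deterministic z seq comb"
proof -
  define f where "f = foldl seq z"
  have fz: "f [] = z" by (simp add: f_def)
  let ?C = "(\<forall>a b. comb (f a) (f b) = f (a @ b)) \<and>
            (\<forall>L R. is_partition_of L R \<longrightarrow> f (concat R) = f L)"
  have T: "treeAggregate_deterministic z seq comb \<longleftrightarrow> ?C"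
  proof
    assume td: "treeAggregate_deterministic z seq comb"
    have use: "ap0 comb (map f R) = f L" if h: "is_partition_of L R" for L R
    proof -
      have "partitioning (\<lambda>L'. if L' = L then R else [L'])" using part_id[of L R] h by simp
      then have "treeAggregate_bt ap0 z seq comb ((\<lambda>L'. if L' = L then R else [L']) L) = foldl seq z L"
        using td ap0_inst unfolding treeAggregate_deterministic_def by blast
      then show ?thesis by (simp add: treeAggregate_bt_def f_def)
    qed
    have hom: "comb (f a) (f b) = f (a @ b)" for a b
      using use[OF part_two[of a b]] by (simp add: ap0_def)
    have "f (concat R) = f L" if "is_partition_of L R" for L R
    proof -
      have "map f R \<noteq> []" using part_ne[OF that] by simp
      then have "tree_eval comb (map f R) (ap0 comb (map f R))"
        using ap0_inst unfolding apply_inst_def by blast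
      then have "ap0 comb (map f R) = f (concat R)" using treeA[where f=f and comb=comb, OF hom] by blast
      then show ?thesis using use[OF that] by simp
    qed
    then show ?C using hom by blast
  next
    assume C: ?C
    show "treeAggregate_deterministic z seq comb"
      unfolding treeAggregate_deterministic_def treeAggregate_bt_def
    proof (intro allI impI)
      fix P :: "'a list \<Rightarrow> 'a rdd" and L and ap :: "('b \<Rightarrow> 'b \<Rightarrow> 'b) \<Rightarrow> 'b list \<Rightarrow> 'b"
      assume p: "partitioning P" and a: "apply_inst ap"
      have pl: "is_partition_of L (P L)" using p unfolding partitioning_def by blast
      have "map f (P L) \<noteq> []" using part_ne[OF pl] by simp
      then have "tree_eval comb (map f (P L)) (ap comb (map f (P L)))"
        using a unfolding apply_inst_def by blast
      then have "ap comb (map f (P L)) = f (concat (P L))"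
        using treeA[where f=f and comb=comb] C by blast
      then show "ap comb (map (foldl seq z) (P L)) = foldl seq z L"
        using C pl by (simp add: f_def)
    qed
  qed
  have A: "aggregate_deterministic z seq comb \<longleftrightarrow> ?C"
  proof
    assume ad: "aggregate_deterministic z seq comb"
    have use: "foldl comb z (map f R) = f L" if h: "is_partition_of L R" for L R
    proof -
      have "partitioning (\<lambda>L'. if L' = L then R else [L'])" using part_id[of L R] h by simp
      then have "aggregate_det z seq comb ((\<lambda>L'. if L' = L then R else [L']) L) = foldl seq z L"
        using ad unfolding aggregate_deterministic_def by blast
      then show ?thesis by (simp add: aggregate_det_def f_def)
    qed
    have idl: "comb z (f a) = f a" for a
      using use[OF part_one[of a]] by simp
    have hom: "comb (f a) (f b) = f (a @ b)" for a b
      using use[OF part_two[of a b]] by (simp add: idl)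
    have "f (concat R) = f L" if "is_partition_of L R" for L R
      using use[OF that] foldB[where f=f and comb=comb and z=z and qs=R, OF hom fz] by simp
    then show ?C using hom by blast
  next
    assume C: ?C
    show "aggregate_deterministic z seq comb"
      unfolding aggregate_deterministic_def aggregate_det_def
    proof (intro allI impI)
      fix P :: "'a list \<Rightarrow> 'a rdd" and L
      assume p: "partitioning P"
      have pl: "is_partition_of L (P L)" using p unfolding partitioning_def by blast
      have "foldl comb z (map f (P L)) = f (concat (P L))"
        using foldB[where f=f and comb=comb and z=z] C fz by blast
      then show "foldl comb z (map (foldl seq z) (P L)) = foldl seq z L"
        using C pl by (simp add: f_def)
    qed
  qed
  show ?thesis using T A by simp
qed

end
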